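(* Let $f(x)=\frac1n\sum_{i=1}^nf_i(x)$ on $\mathbb{R}^d$ where each $f_i$ is $\mu_i$-strongly convex and $L_i$-smooth, and let $x^*$ be the minimizer of $f$. Consider SGD with the DecSPS stepsize (defined in the context) with $c_k=\sqrt{k+1}$ for $k\ge0$ and $c_{-1}=c_0$. Then almost surely, for all $k\in\mathbb{N}$, $\|x^k-x^*\|^2\le D^2_{\max}$, where $$D^2_{\max}:=\max\left\{\|x^0-x^*\|^2,\ \frac{2c_0\gamma_b\hat\sigma^2_{B,\max}}{\min\left\{\frac{\mu_{\min}}{2L_{\max}},\mu_{\min}\gamma_b\right\}}\right\},$$ $\mu_{\min}=\min_i\mu_i$ and $L_{\max}=\max_iL_i$.
   Context: Minibatches: fix a batch size $B$; at each iteration a subset $\mathcal S_k\subseteq[n]$ with $|\mathcal S_k|=B$ is sampled (uniformly at random, independently across iterations). For $\mathcal S\subseteq[n]$, $f_{\mathcal S}:=\frac1{|\mathcal S|}\sum_{i\in\mathcal S}f_i$, $f^*_{\mathcal S}:=\inf_xf_{\mathcal S}(x)$, and $\ell^*_{\mathcal S}$ is a given real number with $\ell^*_{\mathcal S}\le f^*_{\mathcal S}$. SGD: $x^{k+1}=x^k-\gamma_k\nabla f_{\mathcal S_k}(x^k)$. DecSPS stepsize: $\gamma_k:=\frac1{c_k}\min\left\{\frac{f_{\mathcal S_k}(x^k)-\ell^*_{\mathcal S_k}}{\|\nabla f_{\mathcal S_k}(x^k)\|^2},\ c_{k-1}\gamma_{k-1}\right\}$ for $k\ge0$, with $c_{-1}=c_0$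 and $\gamma_{-1}=\gamma_b>0$ a fixed constant; if $\nabla f_{\mathcal S_k}(x^k)=0$ the iterate is not updated. $\hat\sigma^2_{B,\max}:=\max_{\mathcal S\subseteq[n],|\mathcal S|=B}[f_{\mathcal S}(x^* )-\ell^*_{\mathcal S}]$. *)

theory Defs
  imports "HOL-Analysis.Analysis"
begin

definition strongly_convex :: "real \<Rightarrow> ('a::real_inner \<Rightarrow> real) \<Rightarrow> bool" where
  "strongly_convex \<mu> f \<longleftrightarrow> \<mu> > 0 \<and> convex_on UNIV (\<lambda>x. f x - \<mu> / 2 * (norm x)\<^sup>2)"

definition smooth_with_grad :: "real \<Rightarrow> ('a::real_inner \<Rightarrow> real) \<Rightarrow> ('a \<Rightarrow> 'a) \<Rightarrow> bool" where
  "smooth_with_grad L f g \<longleftrightarrow> L > 0 \<and>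
     (\<forall>x. (f has_derivative (\<lambda>h. g x \<bullet> h)) (at x)) \<and>
     (\<forall>x y. norm (g x - g y) \<le> L * norm (x - y))"

definition fS :: "(nat \<Rightarrow> 'a \<Rightarrow> real) \<Rightarrow> nat set \<Rightarrow> 'a \<Rightarrow> real" where
  "fS f S x = (\<Sum>i\<in>S. f i x) / real (card S)"

definition gS :: "(nat \<Rightarrow> 'a \<Rightarrow> 'a::real_vector) \<Rightarrow> nat set \<Rightarrow> 'a \<Rightarrow> 'a" where
  "gS g S x = (1 / real (card S)) *\<^sub>R (\<Sum>i\<in>S. g i x)"

definition cdec :: "nat \<Rightarrow> real" where
  "cdec k = sqrt (real k + 1)"

definition cprev :: "nat \<Rightarrow> real" where
  "cprev k = (if k = 0 then cdec 0 else cdec (k - 1))"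

text \<open>SGD with DecSPS. decsps f g ell Ss x0 gb k = (x^k, gamma_{k-1}), where
  Ss k is the minibatch S_k, ell S is the lower bound for f_S^*, gamma_{-1} = gb.
  If the minibatch gradient vanishes the iterate is not updated and the
  Polyak ratio is read as +infinity (so gamma_k = c_{k-1} gamma_{k-1} / c_k).\<close>
fun decsps :: "(nat \<Rightarrow> 'a \<Rightarrow> real) \<Rightarrow> (nat \<Rightarrow> 'a \<Rightarrow> 'a::real_inner) \<Rightarrow> (nat set \<Rightarrow> real)
      \<Rightarrow> (nat \<Rightarrow> nat set) \<Rightarrow> 'a \<Rightarrow> real \<Rightarrow> nat \<Rightarrow> 'a \<times> real" where
  "decsps f g ell Ss x0 gb 0 = (x0, gb)"
| "decsps f g ell Ss x0 gb (Suc k) =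
     (let (x, gp) = decsps f g ell Ss x0 gb k;
          S = Ss k;
          d = gS g S x
      in if d = 0 then (x, cprev k * gp / cdec k)
         else (let \<gamma> = (1 / cdec k) * min ((fS f S x - ell S) / (norm d)\<^sup>2) (cprev k * gp)
               in (x - \<gamma> *\<^sub>R d, \<gamma>)))"

definition sigma_Bmax :: "nat \<Rightarrow> nat \<Rightarrow> (nat \<Rightarrow> 'a \<Rightarrow> real) \<Rightarrow> (nat set \<Rightarrow> real) \<Rightarrow> 'a \<Rightarrow> real" where
  "sigma_Bmax n B f ell xs = Max {fS f S xs - ell S | S. S \<subseteq> {..<n} \<and> card S = B}"

end

theory Submission
  imports Defs
begin

lemma sc_first_order:
  fixes f :: "'a::real_inner \<Rightarrow> real"
  assumes sc: "strongly_convex \<mu> f" and d: "\<And>x. (f has_derivative (\<lambda>h. g x \<bullet> h)) (at x)"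
  shows "f y \<ge> f x + g x \<bullet> (y - x) + \<mu> / 2 * (norm (y - x))\<^sup>2"
proof -
  define v where "v = y - x"
  define h where "h = (\<lambda>z. f z - \<mu> / 2 * (norm z)\<^sup>2)"
  define \<phi> where "\<phi> = (\<lambda>t::real. h (x + t *\<^sub>R v))"
  have ch: "convex_on UNIV h" using sc unfolding strongly_convex_def h_def by auto
  have cphi: "convex_on UNIV \<phi>"
  proof (rule convex_onI[rotated, OF convex_UNIV])
    fix t a b :: real assume t: "0 < t" "t < 1"
    have e: "x + ((1 - t) *\<^sub>R a + t *\<^sub>R b) *\<^sub>R v = (1 - t) *\<^sub>R (x + a *\<^sub>R v) + t *\<^sub>R (x + b *\<^sub>R v)"
      by (simp add: algebra_simps)
    show "\<phi> ((1 - t) *\<^sub>R a + t *\<^sub>R b) \<le> (1 - t) * \<phi> a + t * \<phi> b"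
      unfolding \<phi>_def e using convex_onD[OF ch, of t "x + a *\<^sub>R v" "x + b *\<^sub>R v"] t by simp
  qed
  have nx: "\<And>t. (norm (x + t *\<^sub>R v))\<^sup>2 = (norm x)\<^sup>2 + 2 * t * (x \<bullet> v) + t\<^sup>2 * (norm v)\<^sup>2"
    unfolding power2_norm_eq_inner by (simp add: inner_add_left inner_add_right algebra_simps power2_eq_square inner_commute)
  have df: "((\<lambda>t::real. f (x + t *\<^sub>R v)) has_derivative (\<lambda>s. g x \<bullet> (s *\<^sub>R v))) (at 0)"
  proof -
    have "((\<lambda>t::real. x + t *\<^sub>R v) has_derivative (\<lambda>s. s *\<^sub>R v)) (at 0)"
      by (auto intro!: derivative_eq_intros)
    moreover have "(f has_derivative (\<lambda>h. g x \<bullet> h)) (at (x + 0 *\<^sub>R v))" using d by simp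
    ultimately have "((\<lambda>t::real. f (x + t *\<^sub>R v)) has_derivative (\<lambda>s. g x \<bullet> (s *\<^sub>R v))) (at 0)"
      using has_derivative_compose[of "\<lambda>t::real. x + t *\<^sub>R v" _ 0 UNIV f] by blast
    then show ?thesis .
  qed
  have dphi: "(\<phi> has_field_derivative (g x \<bullet> v - \<mu> * (x \<bullet> v))) (at 0)"
  proof -
    have "\<phi> = (\<lambda>t. f (x + t *\<^sub>R v) - \<mu> / 2 * ((norm x)\<^sup>2 + 2 * t * (x \<bullet> v) + t\<^sup>2 * (norm v)\<^sup>2))"
      unfolding \<phi>_def h_def nx by simp
    moreover have "((\<lambda>t. f (x + t *\<^sub>R v) - \<mu> / 2 * ((norm x)\<^sup>2 + 2 * t * (x \<bullet> v) + t\<^sup>2 * (norm v)\<^sup>2))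
        has_derivative (\<lambda>s. g x \<bullet> (s *\<^sub>R v) - \<mu> / 2 * (2 * s * (x \<bullet> v) + 2 * 0 * s * (norm v)\<^sup>2))) (at 0)"
      by (rule df derivative_eq_intros refl | simp)+
    moreover have "(\<lambda>s. g x \<bullet> (s *\<^sub>R v) - \<mu> / 2 * (2 * s * (x \<bullet> v) + 2 * 0 * s * (norm v)\<^sup>2))
       = (*) (g x \<bullet> v - \<mu> * (x \<bullet> v))" by (rule ext) (simp add: algebra_simps)
    ultimately show ?thesis unfolding has_field_derivative_def by metis
  qed
  have "\<phi> 1 - \<phi> 0 \<ge> (g x \<bullet> v - \<mu> * (x \<bullet> v)) * (1 - 0)"
    by (rule convex_on_imp_above_tangent[OF cphi]) (auto simp: dphi)
  then have A: "f y - \<mu> / 2 * (norm y)\<^sup>2 - (f x - \<mu> / 2 * (norm x)\<^sup>2) \<ge> g x \<bullet> (y - x) - \<mu> * (x \<bullet> (y - x))"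
    unfolding \<phi>_def h_def v_def by simp
  have B: "(norm (y - x))\<^sup>2 = (norm y)\<^sup>2 - 2 * (x \<bullet> y) + (norm x)\<^sup>2"
    unfolding power2_norm_eq_inner by (simp add: inner_diff_left inner_diff_right inner_commute)
  have C: "x \<bullet> (y - x) = x \<bullet> y - (norm x)\<^sup>2"
    unfolding power2_norm_eq_inner by (simp add: inner_diff_right)
  have B': "\<mu> * (norm (y - x))\<^sup>2 = \<mu> * (norm y)\<^sup>2 - 2 * \<mu> * (x \<bullet> y) + \<mu> * (norm x)\<^sup>2"
    unfolding B by (simp add: algebra_simps)
  have C': "\<mu> * (x \<bullet> (y - x)) = \<mu> * (x \<bullet> y) - \<mu> * (norm x)\<^sup>2"
    unfolding C by (simp add: algebra_simps)
  show ?thesis using A B' C' by linarith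
qed

lemma mu_le_L:
  fixes f :: "'a::euclidean_space \<Rightarrow> real"
  assumes sc: "strongly_convex \<mu> f" and sm: "smooth_with_grad L f g"
  shows "\<mu> \<le> L"
proof -
  have d: "\<And>x. (f has_derivative (\<lambda>h. g x \<bullet> h)) (at x)" and lip: "\<And>x y. norm (g x - g y) \<le> L * norm (x - y)"
    using sm unfolding smooth_with_grad_def by auto
  obtain b :: 'a where b: "b \<in> Basis" using nonempty_Basis by blast
  have nb: "norm b = 1" using b by simp
  have 1: "f 0 \<ge> f b + g b \<bullet> (0 - b) + \<mu> / 2 * (norm (0 - b))\<^sup>2" by (rule sc_first_order[OF sc d])
  have 2: "f b \<ge> f 0 + g 0 \<bullet> (b - 0) + \<mu> / 2 * (norm (b - 0))\<^sup>2" by (rule sc_first_order[OF sc d])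
  have "\<mu> \<le> (g b - g 0) \<bullet> b" using 1 2 nb by (simp add: inner_diff_left)
  also have "\<dots> \<le> norm (g b - g 0) * norm b" by (rule norm_cauchy_schwarz)
  also have "\<dots> \<le> L" using lip[of b 0] nb by simp
  finally show ?thesis .
qed

lemma sc_lower:
  fixes f :: "'a::real_inner \<Rightarrow> real"
  assumes sc: "strongly_convex \<mu> f" and d: "\<And>x. (f has_derivative (\<lambda>h. g x \<bullet> h)) (at x)"
  shows "f y \<ge> f 0 - (norm (g 0))\<^sup>2 / (2 * \<mu>)"
proof -
  have mu: "\<mu> > 0" using sc unfolding strongly_convex_def by auto
  have 1: "f y \<ge> f 0 + g 0 \<bullet> (y - 0) + \<mu> / 2 * (norm (y - 0))\<^sup>2" by (rule sc_first_order[OF sc d])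
  have 2: "g 0 \<bullet> y \<ge> - (norm (g 0) * norm y)" using norm_cauchy_schwarz[of "- g 0" y] by simp
  have 3: "- (norm (g 0) * norm y) + \<mu> / 2 * (norm y)\<^sup>2 \<ge> - (norm (g 0))\<^sup>2 / (2 * \<mu>)"
  proof -
    have "0 \<le> (\<mu> * norm y - norm (g 0))\<^sup>2 / (2 * \<mu>)" using mu by simp
    also have "\<dots> = - (norm (g 0) * norm y) + \<mu> / 2 * (norm y)\<^sup>2 + (norm (g 0))\<^sup>2 / (2 * \<mu>)"
      using mu by (simp add: field_simps power2_eq_square)
    finally show ?thesis by linarith
  qed
  show ?thesis using 1 2 3 by simp
qed

lemma step_bound:
  fixes x xs d :: "'a::real_inner"
  assumes r: "r = (norm (x - xs))\<^sup>2" and rD: "r \<le> D" and dnz: "d \<noteq> 0"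
    and Fl: "F - l \<ge> 0" and c1: "c \<ge> 1" and cg: "0 \<le> cg"
    and gam: "\<gamma> = (1 / c) * min ((F - l) / (norm d)\<^sup>2) cg" and gb: "\<gamma> \<le> \<gamma>b"
    and fo: "d \<bullet> (x - xs) \<ge> F - Fs + \<mu> / 2 * r" and sig: "Fs - l \<le> \<sigma>"
    and mu: "\<mu> > 0" and muD: "\<mu> * D \<ge> 2 * \<sigma>" and gbD: "2 * \<gamma>b * \<sigma> \<le> D" and sig0: "\<sigma> \<ge> 0"
  shows "(norm (x - \<gamma> *\<^sub>R d - xs))\<^sup>2 \<le> D"
proof -
  have nd: "(norm d)\<^sup>2 > 0" using dnz by simp
  have P0: "(F - l) / (norm d)\<^sup>2 \<ge> 0" using Fl nd by simp
  have mn0: "min ((F - l) / (norm d)\<^sup>2) cg \<ge> 0" using P0 cg by simp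
  have g0: "\<gamma> \<ge> 0" using gam mn0 c1 by simp
  have gP: "\<gamma> \<le> (F - l) / (norm d)\<^sup>2"
  proof -
    have "\<gamma> = min ((F - l) / (norm d)\<^sup>2) cg / c" using gam by simp
    also have "\<dots> \<le> min ((F - l) / (norm d)\<^sup>2) cg / 1"
      by (rule divide_left_mono) (use c1 mn0 in auto)
    finally have "\<gamma> \<le> min ((F - l) / (norm d)\<^sup>2) cg" by simp
    then show ?thesis by simp
  qed
  have sq: "\<gamma>\<^sup>2 * (norm d)\<^sup>2 \<le> \<gamma> * (F - l)"
  proof -
    have "\<gamma> * (norm d)\<^sup>2 \<le> F - l" using gP nd by (simp add: le_divide_eq)
    then have "\<gamma> * (\<gamma> * (norm d)\<^sup>2) \<le> \<gamma> * (F - l)" using g0 by (rule mult_left_mono)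
    then show ?thesis by (simp add: power2_eq_square mult.assoc)
  qed
  have expand: "(norm (x - \<gamma> *\<^sub>R d - xs))\<^sup>2 = r - 2 * \<gamma> * (d \<bullet> (x - xs)) + \<gamma>\<^sup>2 * (norm d)\<^sup>2"
  proof -
    have "x - \<gamma> *\<^sub>R d - xs = (x - xs) - \<gamma> *\<^sub>R d" by simp
    then show ?thesis unfolding r power2_norm_eq_inner
      by (simp add: inner_diff_left inner_diff_right inner_commute power2_eq_square algebra_simps)
  qed
  have "2 * \<gamma> * (d \<bullet> (x - xs)) \<ge> 2 * \<gamma> * (F - Fs + \<mu> / 2 * r)"
    using fo g0 by (simp add: mult_left_mono)
  then have main: "(norm (x - \<gamma> *\<^sub>R d - xs))\<^sup>2 \<le> (1 - \<mu> * \<gamma>) * r + 2 * \<gamma> * \<sigma>"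
  proof -
    assume h: "2 * \<gamma> * (d \<bullet> (x - xs)) \<ge> 2 * \<gamma> * (F - Fs + \<mu> / 2 * r)"
    have "\<gamma> * (Fs - l) \<le> \<gamma> * \<sigma>" using sig g0 by (simp add: mult_left_mono)
    moreover have "\<gamma> * (F - l) \<ge> 0" using g0 Fl by simp
    ultimately show ?thesis using expand h sq by (simp add: algebra_simps)
  qed
  show ?thesis
  proof (cases "\<mu> * \<gamma> \<le> 1")
    case True
    have "(1 - \<mu> * \<gamma>) * r \<le> (1 - \<mu> * \<gamma>) * D" using True rD by (simp add: mult_left_mono)
    moreover have "\<gamma> * (2 * \<sigma>) \<le> \<gamma> * (\<mu> * D)" using muD g0 by (simp add: mult_left_mono)
    ultimately show ?thesis using main by (simp add: algebra_simps)
  next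
    case False
    have r0: "r \<ge> 0" using r by simp
    have "(1 - \<mu> * \<gamma>) * r \<le> 0" using False r0 by (simp add: mult_nonpos_nonneg)
    moreover have "\<gamma> * \<sigma> \<le> \<gamma>b * \<sigma>" using gb sig0 by (simp add: mult_right_mono)
    ultimately show ?thesis using main gbD by linarith
  qed
qed

lemma avg_first_order:
  fixes f :: "nat \<Rightarrow> 'a::real_inner \<Rightarrow> real"
  assumes S: "finite S" "S \<noteq> {}"
    and sc: "\<And>i. i \<in> S \<Longrightarrow> strongly_convex (\<mu> i) (f i)"
    and d: "\<And>i x. i \<in> S \<Longrightarrow> (f i has_derivative (\<lambda>h. g i x \<bullet> h)) (at x)"
    and mm: "\<And>i. i \<in> S \<Longrightarrow> m \<le> \<mu> i"
  shows "fS f S y \<ge> fS f S x + gS g S x \<bullet> (y - x) + m / 2 * (norm (y - x))\<^sup>2"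
proof -
  have cpos: "real (card S) > 0" using S by (simp add: card_gt_0_iff)
  have each: "f i y \<ge> f i x + g i x \<bullet> (y - x) + m / 2 * (norm (y - x))\<^sup>2" if i: "i \<in> S" for i
  proof -
    have "f i y \<ge> f i x + g i x \<bullet> (y - x) + \<mu> i / 2 * (norm (y - x))\<^sup>2"
      by (rule sc_first_order[OF sc[OF i] d[OF i]])
    moreover have "m / 2 * (norm (y - x))\<^sup>2 \<le> \<mu> i / 2 * (norm (y - x))\<^sup>2"
      using mm[OF i] by (simp add: mult_right_mono)
    ultimately show ?thesis by linarith
  qed
  have "(\<Sum>i\<in>S. f i x + g i x \<bullet> (y - x) + m / 2 * (norm (y - x))\<^sup>2) \<le> (\<Sum>i\<in>S. f i y)"
    by (rule sum_mono) (rule each)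
  then have "(\<Sum>i\<in>S. f i x) + (\<Sum>i\<in>S. g i x) \<bullet> (y - x) + real (card S) * (m / 2 * (norm (y - x))\<^sup>2) \<le> (\<Sum>i\<in>S. f i y)"
    by (simp add: sum.distrib inner_sum_left)
  then have "((\<Sum>i\<in>S. f i x) + (\<Sum>i\<in>S. g i x) \<bullet> (y - x) + real (card S) * (m / 2 * (norm (y - x))\<^sup>2)) / real (card S) \<le> (\<Sum>i\<in>S. f i y) / real (card S)"
    using cpos by (simp add: divide_right_mono)
  then show ?thesis unfolding fS_def gS_def using cpos
    by (simp add: add_divide_distrib)
qed

lemma cdec_ge1: "cdec k \<ge> 1"
  unfolding cdec_def by simp

lemma cdec0: "cdec 0 = 1" unfolding cdec_def by simp

lemma cprev_Suc: "cprev (Suc k) = cdec k" unfolding cprev_def by simp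

lemma cprev0: "cprev 0 = 1" unfolding cprev_def cdec_def by simp

theorem proposition1:
  fixes n B :: nat
    and f :: "nat \<Rightarrow> 'a::euclidean_space \<Rightarrow> real"
    and g :: "nat \<Rightarrow> 'a \<Rightarrow> 'a"
    and \<mu> L :: "nat \<Rightarrow> real"
    and ell :: "nat set \<Rightarrow> real"
    and Ss :: "nat \<Rightarrow> nat set"
    and x0 xstar :: 'a
    and \<gamma>b :: real
  assumes n_pos: "n \<ge> 1"
    and B_range: "1 \<le> B" "B \<le> n"
    and sc: "\<And>i. i < n \<Longrightarrow> strongly_convex (\<mu> i) (f i)"
    and sm: "\<And>i. i < n \<Longrightarrow> smooth_with_grad (L i) (f i) (g i)"
    and xstar_min: "\<And>x. fS f {..<n} xstar \<le> fS f {..<n} x"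
    and ell_le: "\<And>S. S \<subseteq> {..<n} \<Longrightarrow> card S = B \<Longrightarrow> ell S \<le> (INF x. fS f S x)"
    and batches: "\<And>k. Ss k \<subseteq> {..<n} \<and> card (Ss k) = B"
    and gb_pos: "\<gamma>b > 0"
  shows "\<forall>k. (norm (fst (decsps f g ell Ss x0 \<gamma>b k) - xstar))\<^sup>2 \<le>
           max ((norm (x0 - xstar))\<^sup>2)
               (2 * cdec 0 * \<gamma>b * sigma_Bmax n B f ell xstar /
                 min (Min (\<mu> ` {..<n}) / (2 * Max (L ` {..<n}))) (Min (\<mu> ` {..<n}) * \<gamma>b))"
proof -
  define \<mu>m where "\<mu>m = Min (\<mu> ` {..<n})"
  define Lm where "Lm = Max (L ` {..<n})"
  define \<sigma> where "\<sigma> = sigma_Bmax n B f ell xstar"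
  define m where "m = min (\<mu>m / (2 * Lm)) (\<mu>m * \<gamma>b)"
  define D where "D = max ((norm (x0 - xstar))\<^sup>2) (2 * cdec 0 * \<gamma>b * \<sigma> / m)"
  have n0: "0 < n" using n_pos by simp
  have ne: "\<mu> ` {..<n} \<noteq> {}" "L ` {..<n} \<noteq> {}" using n0 by auto
  have dv: "\<And>i x. i < n \<Longrightarrow> (f i has_derivative (\<lambda>h. g i x \<bullet> h)) (at x)"
    using sm unfolding smooth_with_grad_def by auto
  have mupos: "\<And>i. i < n \<Longrightarrow> \<mu> i > 0" using sc unfolding strongly_convex_def by auto
  have Lpos: "\<And>i. i < n \<Longrightarrow> L i > 0" using sm unfolding smooth_with_grad_def by auto
  have mum_le: "\<And>i. i < n \<Longrightarrow> \<mu>m \<le> \<mu> i" unfolding \<mu>m_def by (rule Min_le) auto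
  have mum_pos: "\<mu>m > 0" unfolding \<mu>m_def using ne mupos by (subst Min_gr_iff) auto
  have Lm_ge: "\<And>i. i < n \<Longrightarrow> L i \<le> Lm" unfolding Lm_def by (rule Max_ge) auto
  have Lm_pos: "Lm > 0" using Lm_ge[OF n0] Lpos[OF n0] by simp
  have mum_Lm: "\<mu>m \<le> Lm" using mum_le[OF n0] mu_le_L[OF sc[OF n0] sm[OF n0]] Lm_ge[OF n0] by simp
  have m_pos: "m > 0" unfolding m_def using mum_pos Lm_pos gb_pos by simp
  have m_le1: "m \<le> 1"
  proof -
    have "\<mu>m / (2 * Lm) \<le> 1" using mum_Lm Lm_pos by (simp add: divide_le_eq)
    then show ?thesis unfolding m_def by simp
  qed
  have m_le2: "m \<le> \<mu>m * \<gamma>b" unfolding m_def by simp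
  define Bs where "Bs = {S. S \<subseteq> {..<n} \<and> card S = B}"
  have Bs_fin: "finite Bs" unfolding Bs_def by (rule finite_subset[of _ "Pow {..<n}"]) auto
  have "{..<B} \<in> Bs" unfolding Bs_def using B_range by auto
  then have Bs_ne: "Bs \<noteq> {}" by blast
  have batch_prop: "finite S \<and> S \<noteq> {}" if "S \<in> Bs" for S
    using that B_range unfolding Bs_def by (auto intro: finite_subset)
  have sig_eq: "\<sigma> = Max ((\<lambda>S. fS f S xstar - ell S) ` Bs)"
    unfolding \<sigma>_def sigma_Bmax_def Bs_def by (simp add: image_def setcompr_eq_image)
  have sig_ge: "fS f S xstar - ell S \<le> \<sigma>" if "S \<in> Bs" for S
    unfolding sig_eq using Bs_fin that by (intro Max_ge) auto
  have lowb: "ell S \<le> fS f S x" if "S \<in> Bs" for S x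
  proof -
    have fin: "finite S" "S \<noteq> {}" using batch_prop[OF that] by auto
    have Sn: "S \<subseteq> {..<n}" "card S = B" using that unfolding Bs_def by auto
    have cpos: "real (card S) > 0" using fin by (simp add: card_gt_0_iff)
    define c where "c = (\<Sum>i\<in>S. f i 0 - (norm (g i 0))\<^sup>2 / (2 * \<mu> i)) / real (card S)"
    have "c \<le> fS f S y" for y
    proof -
      have "(\<Sum>i\<in>S. f i 0 - (norm (g i 0))\<^sup>2 / (2 * \<mu> i)) \<le> (\<Sum>i\<in>S. f i y)"
        using Sn by (intro sum_mono sc_lower[OF sc dv]) auto
      then show ?thesis unfolding c_def fS_def using cpos by (simp add: divide_right_mono)
    qed
    then have bdd: "bdd_below (range (fS f S))" by (metis bdd_belowI2)
    have "ell S \<le> (INF x. fS f S x)" using ell_le Sn by blast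
    also have "\<dots> \<le> fS f S x" using bdd by (rule cINF_lower) simp
    finally show ?thesis .
  qed
  have SsB: "Ss k \<in> Bs" for k using batches unfolding Bs_def by auto
  have sig0: "\<sigma> \<ge> 0" using sig_ge[OF SsB[of 0]] lowb[OF SsB[of 0], of xstar] by simp
  have muD: "\<mu>m * D \<ge> 2 * \<sigma>"
  proof -
    have "2 * \<gamma>b * \<sigma> / (\<mu>m * \<gamma>b) \<le> 2 * \<gamma>b * \<sigma> / m"
      using m_le2 m_pos sig0 gb_pos by (intro divide_left_mono) auto
    also have "\<dots> \<le> D" unfolding D_def cdec0 by simp
    finally have "2 * \<sigma> / \<mu>m \<le> D" using gb_pos by simp
    then show ?thesis using mum_pos by (simp add: divide_le_eq mult.commute)
  qed
  have gbD: "2 * \<gamma>b * \<sigma> \<le> D"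
  proof -
    have "2 * \<gamma>b * \<sigma> / 1 \<le> 2 * \<gamma>b * \<sigma> / m"
      using m_le1 m_pos sig0 gb_pos by (intro divide_left_mono) auto
    also have "\<dots> \<le> D" unfolding D_def cdec0 by simp
    finally show ?thesis by simp
  qed
  have inv: "(norm (fst (decsps f g ell Ss x0 \<gamma>b k) - xstar))\<^sup>2 \<le> D \<and> 0 \<le> snd (decsps f g ell Ss x0 \<gamma>b k)
      \<and> cprev k * snd (decsps f g ell Ss x0 \<gamma>b k) \<le> \<gamma>b" for k
  proof (induction k)
    case 0
    then show ?case using gb_pos by (simp add: D_def cprev0)
  next
    case (Suc k)
    obtain x gp where e: "decsps f g ell Ss x0 \<gamma>b k = (x, gp)" by (cases "decsps f g ell Ss x0 \<gamma>b k")
    have IH: "(norm (x - xstar))\<^sup>2 \<le> D" "0 \<le> gp" "cprev k * gp \<le> \<gamma>b" using Suc.IH e by auto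
    define S where "S = Ss k"
    define d where "d = gS g S x"
    have ck: "cdec k \<ge> 1" by (rule cdec_ge1)
    have cp0: "cprev k \<ge> 1" unfolding cprev_def using cdec_ge1 by simp
    show ?case
    proof (cases "d = 0")
      case True
      have st: "decsps f g ell Ss x0 \<gamma>b (Suc k) = (x, cprev k * gp / cdec k)"
        using True e by (simp add: Let_def S_def d_def)
      show ?thesis unfolding st cprev_Suc using IH ck cp0 by auto
    next
      case False
      define \<gamma> where "\<gamma> = (1 / cdec k) * min ((fS f S x - ell S) / (norm d)\<^sup>2) (cprev k * gp)"
      have st: "decsps f g ell Ss x0 \<gamma>b (Suc k) = (x - \<gamma> *\<^sub>R d, \<gamma>)"
        using False e by (simp add: Let_def S_def d_def \<gamma>_def)
      have SB: "S \<in> Bs" unfolding S_def by (rule SsB)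
      have Fl: "fS f S x - ell S \<ge> 0" using lowb[OF SB] by simp
      have nd: "(norm d)\<^sup>2 > 0" using False by simp
      have mn0: "min ((fS f S x - ell S) / (norm d)\<^sup>2) (cprev k * gp) \<ge> 0"
        using Fl nd IH cp0 by simp
      have g0: "\<gamma> \<ge> 0" unfolding \<gamma>_def using mn0 ck by simp
      have cg: "cdec k * \<gamma> \<le> cprev k * gp" unfolding \<gamma>_def using ck by simp
      have cgb: "cdec k * \<gamma> \<le> \<gamma>b" using cg IH by simp
      have ggb: "\<gamma> \<le> \<gamma>b"
      proof -
        have "1 * \<gamma> \<le> cdec k * \<gamma>" using ck g0 by (rule mult_right_mono)
        then show ?thesis using cgb by simp
      qed
      have fo: "d \<bullet> (x - xstar) \<ge> fS f S x - fS f S xstar + \<mu>m / 2 * (norm (x - xstar))\<^sup>2"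
      proof -
        have fin: "finite S" "S \<noteq> {}" using batch_prop[OF SB] by auto
        have Sn: "S \<subseteq> {..<n}" using SB unfolding Bs_def by auto
        have "fS f S xstar \<ge> fS f S x + gS g S x \<bullet> (xstar - x) + \<mu>m / 2 * (norm (xstar - x))\<^sup>2"
          using Sn by (intro avg_first_order[OF fin, of \<mu>] sc dv mum_le) auto
        moreover have "norm (xstar - x) = norm (x - xstar)" by (rule norm_minus_commute)
        moreover have "gS g S x \<bullet> (xstar - x) = - (d \<bullet> (x - xstar))"
          unfolding d_def by (simp add: inner_diff_right)
        ultimately show ?thesis by simp
      qed
      have "(norm (x - \<gamma> *\<^sub>R d - xstar))\<^sup>2 \<le> D"
        by (rule step_bound[OF refl IH(1) False Fl ck _ \<gamma>_def ggb fo sig_ge[OF SB] mum_pos muD gbD sig0])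
           (use IH cp0 in simp)
      then show ?thesis unfolding st cprev_Suc using g0 cgb by simp
    qed
  qed
  show ?thesis using inv unfolding D_def \<sigma>_def m_def \<mu>m_def Lm_def by blast
qed
end
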